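(* In the connectivity graph model, let $T=(V,E)$ be a tree shape and $\sigma$ a growth process for $T$ starting from a single node $u_0\in V$. For every root-to-leaf path of $T$ rooted at $u_0$, let $(u_0,u_1,\dots,u_l)$ be the sequence of its turning points in order (the path restricted to its turning points). Then $u_0\mapsto_\sigma u_1\mapsto_\sigma\cdots\mapsto_\sigma u_l$.
   Context: Shapes. Grid points are integer pairs $(x,y)$; two grid points are adjacent if they are at orthogonal (Manhattan) distance $1$. A shape $S=(V,E)$ is a finite connected graph whose nodes occupy distinct grid points and whose edges join only pairs of nodes occupying adjacent points; shapes are considered up to translation. Growth operations. One node, the anchor $u_0$, is stationary; other nodes move relative to it, and a tree is rooted at $u_0$. A growth operation on a node $u$ toward an adjacent grid point $p$ either (i) if $u$ has no edge to $p$, creates a new node $u'$ at $p$ with edge $uu'$; or (ii) if $p$ is occupied by a node $v$ with $uv\in E$, creates a new node $u'$ at $p$, replaces edge $uv$ by edges $uu',u'v$, and translates by one unit, along the axis of $uv$, the part of the tree hanging from whichever of $u,v$ is farther from $u_0$, away from the other endpoint. In one time step a set of operations is applied concurrently, each node receiving at most one operation and all operations having the same cardinal direction; the displacement of each node is the sum of the unit vectors contributed by the operations on its path to $u_0$. The set is collision-free if no two nodes collide during these motions or end at the same point. Growth processes (connectivity graph model). A growth process from an initial shape $S_0$ performs time steps $t=1,2,\dots$, each applying a collision-free set of growth operations to the current shape; no edges are deleted and no edges are created other than by the operations. It grows $S$ from $S_0$ in $t_f$ time steps if the shape obtained after step $t_f$ is $S$. Relations. $u\stackrel{t}{\rightarrow}_\sigma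 v$ means node $u$ generates node $v$ at time step $t$; $u\rightsquigarrow_\sigma v$ means there is a chain $u=w_1\rightarrow_\sigma w_2\rightarrow_\sigma\cdots\rightarrow_\sigma w_m=v$ with $m\ge2$. For turning points $u,v$ of $T$, $u\stackrel{t}{\mapsto}_\sigma v$ means either $u\stackrel{t}{\rightarrow}_\sigma v$, or $u\rightsquigarrow_\sigma u'\stackrel{t}{\rightarrow}_\sigma v$ for some node $u'$ with $u,u',v$ lying on a common straight line segment of the shape at the end of time step $t$; $u\mapsto_\sigma v$ means this holds for some $t\ge1$. A node $w$ of a path is a turning point of the path if it is an endpoint or its two path-neighbors $v_1,v_2$ satisfy $v_1w\perp wv_2$. *)

theory Defs
  imports Complex_Main "HOL-Library.Product_Plus"
begin

type_synonym pt = "int \<times> int"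

definition grid_adj :: "pt \<Rightarrow> pt \<Rightarrow> bool" where
  "grid_adj p q \<longleftrightarrow> \<bar>fst p - fst q\<bar> + \<bar>snd p - snd q\<bar> = 1"

text \<open>Edges are unordered pairs, represented as two-element sets.\<close>
definition erel :: "'a set set \<Rightarrow> ('a \<times> 'a) set" where
  "erel E = {(x, y). {x, y} \<in> E}"

definition comp :: "'a set set \<Rightarrow> 'a \<Rightarrow> 'a set" where
  "comp E x = {y. (x, y) \<in> (erel E)\<^sup>*}"

definition is_shape :: "'a set \<Rightarrow> 'a set set \<Rightarrow> ('a \<Rightarrow> pt) \<Rightarrow> bool" where
  "is_shape V E pos \<longleftrightarrow> finite V \<and> V \<noteq> {} \<and> inj_on pos V \<and>
     (\<forall>e\<in>E. \<exists>x y. e = {x, y} \<and> x \<noteq> y \<and> x \<in> V \<and> y \<in> V \<and> grid_adj (pos x) (pos y)) \<and>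
     (\<forall>x\<in>V. \<forall>y\<in>V. (x, y) \<in> (erel E)\<^sup>*)"

definition tree_shape :: "'a set \<Rightarrow> 'a set set \<Rightarrow> ('a \<Rightarrow> pt) \<Rightarrow> bool" where
  "tree_shape V E pos \<longleftrightarrow> is_shape V E pos \<and> finite E \<and> card E + 1 = card V"

definition unit_dirs :: "pt set" where
  "unit_dirs = {(1, 0), (-1, 0), (0, 1), (0, -1)}"

text \<open>Operation on u toward u + d is of type (ii) (subdivision) iff u has an edge to the node at u + d.\<close>
definition subdiv :: "'a set set \<Rightarrow> ('a \<Rightarrow> pt) \<Rightarrow> pt \<Rightarrow> 'a \<Rightarrow> bool" where
  "subdiv E pos d u \<longleftrightarrow> (\<exists>v. {u, v} \<in> E \<and> pos v = pos u + d)"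

definition tgt :: "'a set set \<Rightarrow> ('a \<Rightarrow> pt) \<Rightarrow> pt \<Rightarrow> 'a \<Rightarrow> 'a" where
  "tgt E pos d u = (THE v. {u, v} \<in> E \<and> pos v = pos u + d)"

text \<open>b is the endpoint of edge ab farther from the anchor u0: removing the edge separates b from u0.\<close>
definition far_end :: "'a \<Rightarrow> 'a set set \<Rightarrow> 'a \<Rightarrow> 'a \<Rightarrow> bool" where
  "far_end u0 E a b \<longleftrightarrow> u0 \<notin> comp (E - {{a, b}}) b"

text \<open>Part of the tree translated by the operation on u (empty for type (i)).\<close>
definition moved :: "'a \<Rightarrow> 'a set set \<Rightarrow> ('a \<Rightarrow> pt) \<Rightarrow> pt \<Rightarrow> 'a \<Rightarrow> 'a set" where
  "moved u0 E pos d u =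
     (if subdiv E pos d u then
        (let v = tgt E pos d u in
          if far_end u0 E u v then comp (E - {{u, v}}) v else comp (E - {{u, v}}) u)
      else {})"

text \<open>Translation vector contributed by the operation on u.\<close>
definition mvec :: "'a \<Rightarrow> 'a set set \<Rightarrow> ('a \<Rightarrow> pt) \<Rightarrow> pt \<Rightarrow> 'a \<Rightarrow> pt" where
  "mvec u0 E pos d u =
     (if subdiv E pos d u \<and> \<not> far_end u0 E u (tgt E pos d u) then - d else d)"

text \<open>Displacement of an existing node x: sum of the contributions of the operations on its path to u0.\<close>
definition disp :: "'a \<Rightarrow> 'a set set \<Rightarrow> ('a \<Rightarrow> pt) \<Rightarrow> pt \<Rightarrow> 'a set \<Rightarrow> 'a \<Rightarrow> pt" where
  "disp u0 E pos d Ops x = (\<Sum>u\<in>Ops. if x \<in> moved u0 E pos d u then mvec u0 E pos d u else 0)"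

text \<open>Resulting node set, edge set and positions of applying operations on the nodes of Ops
  (all in direction d), the new node created by the operation on u being nw u.\<close>
definition step_V :: "'a set \<Rightarrow> 'a set \<Rightarrow> ('a \<Rightarrow> 'a) \<Rightarrow> 'a set" where
  "step_V V Ops nw = V \<union> nw ` Ops"

definition step_E :: "'a set set \<Rightarrow> ('a \<Rightarrow> pt) \<Rightarrow> pt \<Rightarrow> 'a set \<Rightarrow> ('a \<Rightarrow> 'a) \<Rightarrow> 'a set set" where
  "step_E E pos d Ops nw =
     (E - {{u, tgt E pos d u} | u. u \<in> Ops \<and> subdiv E pos d u})
     \<union> {{u, nw u} | u. u \<in> Ops}
     \<union> {{nw u, tgt E pos d u} | u. u \<in> Ops \<and> subdiv E pos d u}"

definition step_pos :: "'a \<Rightarrow> 'a set \<Rightarrow> 'a set set \<Rightarrow> ('a \<Rightarrow> pt) \<Rightarrow> pt \<Rightarrow> 'a set \<Rightarrow> ('a \<Rightarrow> 'a)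
    \<Rightarrow> 'a \<Rightarrow> pt" where
  "step_pos u0 V E pos d Ops nw x =
     (if x \<in> V then pos x + disp u0 E pos d Ops x
      else if x \<in> nw ` Ops then
        (let u = (THE u. u \<in> Ops \<and> nw u = x) in
          if subdiv E pos d u \<and> \<not> far_end u0 E u (tgt E pos d u)
          then pos (tgt E pos d u) + disp u0 E pos d Ops (tgt E pos d u) - d
          else pos u + disp u0 E pos d Ops u + d)
      else pos x)"

text \<open>Collision-freeness: no two existing nodes meet while moving (linearly, simultaneously)
  and no two nodes end at the same point.\<close>
definition collision_free :: "'a \<Rightarrow> 'a set \<Rightarrow> 'a set set \<Rightarrow> ('a \<Rightarrow> pt) \<Rightarrow> pt \<Rightarrow> 'a set
    \<Rightarrow> ('a \<Rightarrow> 'a) \<Rightarrow> bool" where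
  "collision_free u0 V E pos d Ops nw \<longleftrightarrow>
     inj_on (step_pos u0 V E pos d Ops nw) (step_V V Ops nw) \<and>
     (\<forall>x\<in>V. \<forall>y\<in>V. x \<noteq> y \<longrightarrow> (\<forall>\<tau>::real. 0 \<le> \<tau> \<and> \<tau> \<le> 1 \<longrightarrow>
        (real_of_int (fst (pos x)) + \<tau> * real_of_int (fst (disp u0 E pos d Ops x)),
         real_of_int (snd (pos x)) + \<tau> * real_of_int (snd (disp u0 E pos d Ops x)))
        \<noteq>
        (real_of_int (fst (pos y)) + \<tau> * real_of_int (fst (disp u0 E pos d Ops y)),
         real_of_int (snd (pos y)) + \<tau> * real_of_int (snd (disp u0 E pos d Ops y)))))"

text \<open>A valid time step from (V,E,pos) to (V',E',pos'): direction d, operated nodes Ops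
  (each receiving exactly one operation), fresh new nodes nw u.\<close>
definition growth_step :: "'a \<Rightarrow> 'a set \<Rightarrow> 'a set set \<Rightarrow> ('a \<Rightarrow> pt) \<Rightarrow> pt \<Rightarrow> 'a set \<Rightarrow> ('a \<Rightarrow> 'a)
    \<Rightarrow> 'a set \<Rightarrow> 'a set set \<Rightarrow> ('a \<Rightarrow> pt) \<Rightarrow> bool" where
  "growth_step u0 V E pos d Ops nw V' E' pos' \<longleftrightarrow>
     d \<in> unit_dirs \<and> Ops \<subseteq> V \<and> inj_on nw Ops \<and> nw ` Ops \<inter> V = {} \<and>
     collision_free u0 V E pos d Ops nw \<and>
     V' = step_V V Ops nw \<and> E' = step_E E pos d Ops nw \<and>
     (\<forall>x\<in>V'. pos' x = step_pos u0 V E pos d Ops nw x)"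

text \<open>A growth process: number of steps, shapes at the end of each time step (index 0 = initial),
  and for each step t in 1..tf its direction, set of operated nodes and new-node naming.\<close>
record 'a growth =
  g_tf :: nat
  g_V :: "nat \<Rightarrow> 'a set"
  g_E :: "nat \<Rightarrow> 'a set set"
  g_pos :: "nat \<Rightarrow> 'a \<Rightarrow> pt"
  g_dir :: "nat \<Rightarrow> pt"
  g_ops :: "nat \<Rightarrow> 'a set"
  g_new :: "nat \<Rightarrow> 'a \<Rightarrow> 'a"

text \<open>sigma is a growth process from the single node u0 (the anchor) that grows the shape (V,E,pos)
  (equality of positions up to translation).\<close>
definition grows_from_single :: "'a growth \<Rightarrow> 'a \<Rightarrow> 'a set \<Rightarrow> 'a set set \<Rightarrow> ('a \<Rightarrow> pt) \<Rightarrow> bool" where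
  "grows_from_single \<sigma> u0 V E pos \<longleftrightarrow>
     g_V \<sigma> 0 = {u0} \<and> g_E \<sigma> 0 = {} \<and>
     (\<forall>t\<in>{1..g_tf \<sigma>}. growth_step u0 (g_V \<sigma> (t - 1)) (g_E \<sigma> (t - 1)) (g_pos \<sigma> (t - 1))
         (g_dir \<sigma> t) (g_ops \<sigma> t) (g_new \<sigma> t) (g_V \<sigma> t) (g_E \<sigma> t) (g_pos \<sigma> t)) \<and>
     g_V \<sigma> (g_tf \<sigma>) = V \<and> g_E \<sigma> (g_tf \<sigma>) = E \<and>
     (\<exists>c. \<forall>x\<in>V. g_pos \<sigma> (g_tf \<sigma>) x = pos x + c)"

definition gen_at :: "'a growth \<Rightarrow> nat \<Rightarrow> 'a \<Rightarrow> 'a \<Rightarrow> bool" where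
  "gen_at \<sigma> t u v \<longleftrightarrow> 1 \<le> t \<and> t \<le> g_tf \<sigma> \<and> u \<in> g_ops \<sigma> t \<and> v = g_new \<sigma> t u"

definition gen_rel :: "'a growth \<Rightarrow> ('a \<times> 'a) set" where
  "gen_rel \<sigma> = {(u, v). \<exists>t. gen_at \<sigma> t u v}"

definition gen_chain :: "'a growth \<Rightarrow> 'a \<Rightarrow> 'a \<Rightarrow> bool" where
  "gen_chain \<sigma> u v \<longleftrightarrow> (u, v) \<in> (gen_rel \<sigma>)\<^sup>+"

definition is_path :: "'a set \<Rightarrow> 'a set set \<Rightarrow> 'a list \<Rightarrow> bool" where
  "is_path V E ps \<longleftrightarrow> ps \<noteq> [] \<and> distinct ps \<and> set ps \<subseteq> V \<and>
     (\<forall>i. Suc i < length ps \<longrightarrow> {ps ! i, ps ! Suc i} \<in> E)"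

definition straight_segment :: "'a set \<Rightarrow> 'a set set \<Rightarrow> ('a \<Rightarrow> pt) \<Rightarrow> 'a list \<Rightarrow> bool" where
  "straight_segment V E pos ps \<longleftrightarrow> is_path V E ps \<and>
     ((\<forall>x\<in>set ps. fst (pos x) = fst (pos (hd ps))) \<or> (\<forall>x\<in>set ps. snd (pos x) = snd (pos (hd ps))))"

definition on_common_segment :: "'a set \<Rightarrow> 'a set set \<Rightarrow> ('a \<Rightarrow> pt) \<Rightarrow> 'a set \<Rightarrow> bool" where
  "on_common_segment V E pos A \<longleftrightarrow> (\<exists>ps. straight_segment V E pos ps \<and> A \<subseteq> set ps)"

definition maps_at :: "'a growth \<Rightarrow> nat \<Rightarrow> 'a \<Rightarrow> 'a \<Rightarrow> bool" where
  "maps_at \<sigma> t u v \<longleftrightarrow> gen_at \<sigma> t u v \<or>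
     (\<exists>u'. gen_chain \<sigma> u u' \<and> gen_at \<sigma> t u' v \<and>
        on_common_segment (g_V \<sigma> t) (g_E \<sigma> t) (g_pos \<sigma> t) {u, u', v})"

definition maps_to :: "'a growth \<Rightarrow> 'a \<Rightarrow> 'a \<Rightarrow> bool" where
  "maps_to \<sigma> u v \<longleftrightarrow> (\<exists>t\<ge>1. maps_at \<sigma> t u v)"

definition root_leaf_path :: "'a set \<Rightarrow> 'a set set \<Rightarrow> 'a \<Rightarrow> 'a list \<Rightarrow> bool" where
  "root_leaf_path V E u0 ps \<longleftrightarrow> is_path V E ps \<and> hd ps = u0 \<and>
     (\<forall>y. {last ps, y} \<in> E \<longrightarrow> y \<in> set ps)"

definition perp :: "pt \<Rightarrow> pt \<Rightarrow> bool" where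
  "perp a b \<longleftrightarrow> fst a * fst b + snd a * snd b = 0"

definition is_turning :: "('a \<Rightarrow> pt) \<Rightarrow> 'a list \<Rightarrow> nat \<Rightarrow> bool" where
  "is_turning pos ps i \<longleftrightarrow> i < length ps \<and>
     (i = 0 \<or> i = length ps - 1 \<or>
      perp (pos (ps ! i) - pos (ps ! (i - 1))) (pos (ps ! (i + 1)) - pos (ps ! i)))"

definition turning_points :: "('a \<Rightarrow> pt) \<Rightarrow> 'a list \<Rightarrow> 'a list" where
  "turning_points pos ps = map (\<lambda>i. ps ! i) (filter (is_turning pos ps) [0..<length ps])"

end

theory Submission
  imports Defs
begin


lemma erel_sym: "(x,y) \<in> erel F \<Longrightarrow> (y,x) \<in> erel F" by (simp add: erel_def insert_commute)

lemma rtr_sym: "(x,y) \<in> (erel F)\<^sup>* \<Longrightarrow> (y,x) \<in> (erel F)\<^sup>*"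
  by (induction rule: rtrancl_induct) (auto intro: converse_rtrancl_into_rtrancl erel_sym)

lemma comp_refl: "a \<in> comp F a" by (simp add: comp_def)
lemma comp_step: "x \<in> comp F a \<Longrightarrow> {x,y} \<in> F \<Longrightarrow> y \<in> comp F a"
  by (auto simp: comp_def erel_def intro: rtrancl_into_rtrancl)
lemma comp_step': "y \<in> comp F a \<Longrightarrow> {x,y} \<in> F \<Longrightarrow> x \<in> comp F a"
  by (metis comp_step insert_commute)
lemma comp_sym: "b \<in> comp F a \<Longrightarrow> a \<in> comp F b"
  by (simp add: comp_def rtr_sym)

definition good :: "'a set \<Rightarrow> 'a set set \<Rightarrow> ('a \<Rightarrow> pt) \<Rightarrow> bool" where
 "good V E pos \<longleftrightarrow> finite V \<and> (\<forall>e\<in>E. e \<subseteq> V) \<and> inj_on pos V"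

locale gstep =
  fixes u0 :: 'a and V :: "'a set" and E :: "'a set set" and pos :: "'a \<Rightarrow> pt" and d :: pt
    and Ops :: "'a set" and nw :: "'a \<Rightarrow> 'a" and V' :: "'a set" and E' :: "'a set set"
    and pos' :: "'a \<Rightarrow> pt"
  assumes gs: "growth_step u0 V E pos d Ops nw V' E' pos'"
    and gd: "good V E pos"
begin

abbreviation "sp \<equiv> step_pos u0 V E pos d Ops nw"
abbreviation "D \<equiv> disp u0 E pos d Ops"
abbreviation "mv \<equiv> moved u0 E pos d"
abbreviation "tg \<equiv> tgt E pos d"
abbreviation "sd \<equiv> subdiv E pos d"
abbreviation "mvc \<equiv> mvec u0 E pos d"

lemma d_in: "d \<in> unit_dirs" and Ops_sub: "Ops \<subseteq> V" and inj_nw: "inj_on nw Ops"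
  and nw_disj: "nw ` Ops \<inter> V = {}" and cf: "collision_free u0 V E pos d Ops nw"
  and V'_eq: "V' = V \<union> nw ` Ops" and E'_eq: "E' = step_E E pos d Ops nw"
  and pos'_eq: "\<forall>x\<in>V'. pos' x = sp x"
  using gs unfolding growth_step_def step_V_def by auto

lemma d_nz: "d \<noteq> 0" and dd_nz: "d + d \<noteq> 0" and d_neg: "d \<noteq> - d"
  using d_in by (auto simp: unit_dirs_def zero_prod_def)

lemma finV: "finite V" and edgesV: "e \<in> E \<Longrightarrow> e \<subseteq> V" and injV: "inj_on pos V"
  using gd by (auto simp: good_def)

lemma finOps: "finite Ops" using finV Ops_sub finite_subset by blast

lemma nw_notV: "u \<in> Ops \<Longrightarrow> nw u \<notin> V" using nw_disj by auto

lemma inj_sp: "inj_on sp V'"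
  using cf V'_eq by (simp add: collision_free_def step_V_def)

lemma tgt: assumes "sd u" shows "{u, tg u} \<in> E" "pos (tg u) = pos u + d"
proof -
  from assms obtain v where v: "{u,v}\<in>E" "pos v = pos u + d" by (auto simp: subdiv_def)
  have vV: "v \<in> V" using v(1) edgesV by blast
  have uniq: "v' = v" if "{u,v'}\<in>E \<and> pos v' = pos u + d" for v'
  proof -
    have "v' \<in> V" using that edgesV by blast
    moreover have "pos v' = pos v" using that v(2) by simp
    ultimately show ?thesis using vV injV by (simp add: inj_on_eq_iff)
  qed
  have "tg u = v" unfolding tgt_def
    by (rule the_equality) (use v uniq in blast)+
  thus "{u, tg u} \<in> E" "pos (tg u) = pos u + d" using v by auto
qed

lemma tg_V: "sd u \<Longrightarrow> tg u \<in> V" using tgt edgesV by blast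
lemma tg_ne: "sd u \<Longrightarrow> tg u \<noteq> u" using tgt(2) d_nz by fastforce

lemma edges_distinct: assumes "u \<in> Ops" "sd u" "sd g" "{u, tg u} = {g, tg g}" shows "u = g"
proof (rule ccontr)
  assume "u \<noteq> g"
  with assms(4) have "u = tg g" "tg u = g" by (auto simp: doubleton_eq_iff)
  with tgt(2)[OF assms(2)] tgt(2)[OF assms(3)] have "pos g = pos g + (d + d)"
    by (simp add: add.assoc)
  thus False using dd_nz by simp
qed

lemma moved_edge: assumes "{x,y} \<in> E" "sd u \<longrightarrow> {x,y} \<noteq> {u, tg u}"
  shows "x \<in> mv u \<longleftrightarrow> y \<in> mv u"
proof (cases "sd u")
  case True
  then have e: "{x,y} \<in> E - {{u, tg u}}" using assms by auto
  show ?thesis using True unfolding moved_def Let_def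
    by (auto intro: comp_step[OF _ e] comp_step'[OF _ e])
qed (simp add: moved_def)

lemma disp_edge: "{x,y}\<in>E \<Longrightarrow> (\<forall>u\<in>Ops. sd u \<longrightarrow> {x,y} \<noteq> {u, tg u}) \<Longrightarrow> D x = D y"
  unfolding disp_def by (rule sum.cong) (auto dest: moved_edge)

lemma disp_split: "g \<in> Ops \<Longrightarrow> D x = (if x \<in> mv g then mvc g else 0) +
   (\<Sum>u\<in>Ops-{g}. if x \<in> mv u then mvc u else 0)"
  unfolding disp_def using finOps by (simp add: sum.remove)

lemma rest_eq: assumes "g \<in> Ops" "sd g"
  shows "(\<Sum>u\<in>Ops-{g}. if g \<in> mv u then mvc u else 0) = (\<Sum>u\<in>Ops-{g}. if tg g \<in> mv u then mvc u else 0)"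
proof (rule sum.cong)
  fix u assume u: "u \<in> Ops - {g}"
  have "sd u \<longrightarrow> {g, tg g} \<noteq> {u, tg u}" using edges_distinct[of u g] u assms by auto
  thus "(if g \<in> mv u then mvc u else 0) = (if tg g \<in> mv u then mvc u else 0)"
    using moved_edge[OF tgt(1)[OF assms(2)]] by auto
qed simp

lemma the_nw: "g \<in> Ops \<Longrightarrow> (THE u. u \<in> Ops \<and> nw u = nw g) = g"
  using inj_nw by (auto intro!: the_equality dest: inj_onD)

lemma sp_old: "x \<in> V \<Longrightarrow> sp x = pos x + D x" by (simp add: step_pos_def)

lemma sp_new: "g \<in> Ops \<Longrightarrow> sp (nw g) = (if sd g \<and> \<not> far_end u0 E g (tg g)
   then pos (tg g) + D (tg g) - d else pos g + D g + d)"
  using nw_notV the_nw by (simp add: step_pos_def Let_def)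

lemma notcomp: assumes g: "g \<in> Ops" "sd g" shows "tg g \<notin> comp (E - {{g, tg g}}) g"
proof
  let ?v = "tg g"
  assume a: "?v \<in> comp (E - {{g, ?v}}) g"
  hence b: "g \<in> comp (E - {{g, ?v}}) ?v" by (rule comp_sym)
  have "g \<in> mv g" "?v \<in> mv g" using g a b comp_refl unfolding moved_def Let_def by auto
  hence DD: "D g = D ?v" using disp_split[OF g(1), of g] disp_split[OF g(1), of ?v] rest_eq[OF g] by simp
  have inV': "nw g \<in> V'" "g \<in> V'" "?v \<in> V'" using g V'_eq Ops_sub tg_V by auto
  have ne: "nw g \<noteq> g" "nw g \<noteq> ?v" using nw_notV[OF g(1)] g(1) Ops_sub tg_V[OF g(2)] by (metis subsetD)+
  show False
  proof (cases "far_end u0 E g ?v")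
    case True
    hence "sp (nw g) = sp ?v" using sp_new[OF g(1)] sp_old tg_V[OF g(2)] tgt(2)[OF g(2)] DD
      by (simp add: algebra_simps)
    thus False using inj_sp inV' ne by (meson inj_onD)
  next
    case False
    hence "sp (nw g) = sp g" using sp_new[OF g(1)] sp_old Ops_sub g tgt(2)[OF g(2)] DD
      by (auto simp: algebra_simps)
    thus False using inj_sp inV' ne by (meson inj_onD)
  qed
qed

lemma Pnew: assumes g: "g \<in> Ops" shows "sp (nw g) - sp g = d"
proof (cases "sd g \<and> \<not> far_end u0 E g (tg g)")
  case True
  let ?v = "tg g"
  let ?R = "\<Sum>u\<in>Ops-{g}. if g \<in> mv u then mvc u else 0"
  have "g \<in> mv g" "?v \<notin> mv g" using True notcomp[OF g] comp_refl unfolding moved_def Let_def by auto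
  hence "D g = - d + ?R" "D ?v = ?R" using disp_split[OF g, of g] disp_split[OF g, of ?v] rest_eq[OF g] True
    by (auto simp: mvec_def)
  thus ?thesis using True sp_new[OF g] sp_old g Ops_sub tgt(2)[of g] by (auto simp: algebra_simps)
next
  case False
  thus ?thesis using sp_new[OF g] sp_old g Ops_sub by (auto simp: algebra_simps)
qed

lemma Pnew2: assumes g: "g \<in> Ops" "sd g" shows "sp (tg g) - sp (nw g) = d"
proof -
  let ?v = "tg g"
  let ?R = "\<Sum>u\<in>Ops-{g}. if g \<in> mv u then mvc u else 0"
  show ?thesis
  proof (cases "far_end u0 E g (tg g)")
    case True
    have "g \<notin> mv g" "?v \<in> mv g" using True notcomp[OF g] comp_refl comp_sym[of g "E - {{g, tg g}}" "tg g"] g unfolding moved_def Let_def by auto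
    hence "D g = ?R" "D ?v = d + ?R" using disp_split[OF g(1), of g] disp_split[OF g(1), of ?v] rest_eq[OF g] True g
      by (auto simp: mvec_def)
    thus ?thesis using True sp_new[OF g(1)] sp_old g Ops_sub tgt(2)[OF g(2)] tg_V[OF g(2)] by (auto simp: algebra_simps)
  next
    case False
    have "g \<in> mv g" "?v \<notin> mv g" using False notcomp[OF g] comp_refl g unfolding moved_def Let_def by auto
    hence "D ?v = ?R" using disp_split[OF g(1), of ?v] rest_eq[OF g] by auto
    thus ?thesis using False sp_new[OF g(1)] sp_old g tg_V[OF g(2)] by (auto simp: algebra_simps)
  qed
qed


lemma E'_cases: assumes "e \<in> E'"
  shows "(e \<in> E \<and> (\<forall>u\<in>Ops. sd u \<longrightarrow> e \<noteq> {u, tg u})) \<or> (\<exists>u\<in>Ops. e = {u, nw u}) \<or> (\<exists>u\<in>Ops. sd u \<and> e = {nw u, tg u})"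
  using assms unfolding E'_eq step_E_def by blast

lemma good': "good V' E' pos'"
proof -
  have "finite V'" using V'_eq finV finOps by simp
  moreover have "e \<subseteq> V'" if "e \<in> E'" for e
    using E'_cases[OF that] edgesV V'_eq Ops_sub tg_V by blast
  moreover have "inj_on pos' V'" using inj_sp inj_on_cong[of V' pos' sp] pos'_eq by simp
  ultimately show ?thesis by (auto simp: good_def)
qed

lemma E1: assumes "{x,y} \<in> E'" "x \<in> V" "y \<in> V"
  shows "{x,y} \<in> E" "pos' y - pos' x = pos y - pos x"
proof -
  have nn: "\<forall>u\<in>Ops. nw u \<notin> {x,y}" using assms nw_notV by auto
  have h: "{x,y} \<in> E \<and> (\<forall>u\<in>Ops. sd u \<longrightarrow> {x,y} \<noteq> {u, tg u})" using E'_cases[OF assms(1)] nn by auto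
  then show "{x,y}\<in>E" by simp
  have "D x = D y" using disp_edge h by blast
  then show "pos' y - pos' x = pos y - pos x" using pos'_eq V'_eq assms sp_old by (simp add: algebra_simps)
qed

lemma Enew: assumes g: "g \<in> Ops" and e: "{x, nw g} \<in> E'" shows "x = g \<or> (sd g \<and> x = tg g)"
proof -
  have gV: "g \<in> V" using g Ops_sub by blast
  have nwV: "nw g \<notin> V" using nw_notV g by blast
  consider "{x, nw g} \<in> E" | u where "u \<in> Ops" "{x, nw g} = {u, nw u}" | u where "u \<in> Ops" "sd u" "{x, nw g} = {nw u, tg u}"
    using E'_cases[OF e] by blast
  then show ?thesis
  proof cases
    case 1 then show ?thesis using edgesV nwV by blast
  next
    case (2 u)
    have uV: "u \<in> V" using 2 Ops_sub by blast
    have "nw g \<noteq> u" using uV nwV by metis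
    hence "nw g = nw u" using 2 by (auto simp: doubleton_eq_iff)
    hence "u = g" using inj_nw 2 g by (auto dest: inj_onD)
    thus ?thesis using 2 gV nwV by (auto simp: doubleton_eq_iff)
  next
    case (3 u)
    have "tg u \<in> V" using tg_V 3 by blast
    hence "nw g \<noteq> tg u" using nwV by metis
    hence "nw g = nw u" using 3 by (auto simp: doubleton_eq_iff)
    hence "u = g" using inj_nw 3 g by (auto dest: inj_onD)
    thus ?thesis using 3 \<open>tg u \<in> V\<close> nwV by (auto simp: doubleton_eq_iff)
  qed
qed

lemma Enew_mem: "g \<in> Ops \<Longrightarrow> {g, nw g} \<in> E'" "g \<in> Ops \<Longrightarrow> sd g \<Longrightarrow> {nw g, tg g} \<in> E'"
  unfolding E'_eq step_E_def by blast+

lemma new_obtain: assumes "y \<in> V'" "y \<notin> V" obtains g where "g \<in> Ops" "y = nw g"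
  using assms V'_eq by blast

lemma new_nb: assumes "y \<in> V'" "y \<notin> V" "{x,y} \<in> E'" shows "x \<in> V"
proof -
  obtain g where g: "g \<in> Ops" "y = nw g" using new_obtain assms by blast
  have "x = g \<or> (sd g \<and> x = tg g)" using Enew[OF g(1)] assms(3) g by simp
  thus ?thesis using g Ops_sub tg_V by blast
qed

lemma Pnew': "g \<in> Ops \<Longrightarrow> pos' (nw g) - pos' g = d"
  using Pnew pos'_eq V'_eq Ops_sub by auto

lemma Pnew2': "g \<in> Ops \<Longrightarrow> sd g \<Longrightarrow> pos' (tg g) - pos' (nw g) = d"
  using Pnew2 pos'_eq V'_eq tg_V by auto

lemma E2: assumes y: "y \<in> V'" "y \<notin> V" and e: "{x,y} \<in> E'" "{y,z} \<in> E'" and xz: "x \<noteq> z"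
  shows "x \<in> V" "z \<in> V" "{x,z} \<in> E" "pos' y - pos' x = pos z - pos x" "pos' z - pos' y = pos z - pos x"
proof -
  obtain g where g: "g \<in> Ops" "y = nw g" using new_obtain y by blast
  have hx: "x = g \<or> (sd g \<and> x = tg g)" using Enew[OF g(1)] e(1) g by simp
  have hz: "z = g \<or> (sd g \<and> z = tg g)" using Enew[OF g(1)] e(2) g by (simp add: insert_commute)
  have sdg: "sd g" using hx hz xz by auto
  from hx hz xz have cs: "(x = g \<and> z = tg g) \<or> (x = tg g \<and> z = g)" by auto
  have P1: "pos' (nw g) - pos' g = d" and P2: "pos' (tg g) - pos' (nw g) = d"
    using Pnew' Pnew2' g sdg by auto
  have pt: "pos (tg g) = pos g + d" using tgt sdg by blast
  show "x \<in> V" "z \<in> V" using cs g Ops_sub tg_V sdg by auto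
  show "{x,z} \<in> E" using cs tgt(1)[OF sdg] by (auto simp: insert_commute)
  show "pos' y - pos' x = pos z - pos x" "pos' z - pos' y = pos z - pos x"
    using cs P1 P2 pt g by (auto simp: algebra_simps)
qed

end



fun consec :: "('a \<Rightarrow> 'a \<Rightarrow> bool) \<Rightarrow> 'a list \<Rightarrow> bool" where
  "consec R (x # y # r) = (R x y \<and> consec R (y # r))" | "consec R _ = True"

abbreviation "chain F \<equiv> consec (\<lambda>x y. {x,y} \<in> F)"
abbreviation "wrun P w \<equiv> consec (\<lambda>x y. P y - P x = (w::pt))"

lemma consec_Cons: "consec R (x # ys) \<longleftrightarrow> consec R ys \<and> (ys \<noteq> [] \<longrightarrow> R x (hd ys))"
  by (cases ys) auto

lemma consec_append: "consec R (xs @ ys) \<longleftrightarrow> consec R xs \<and> consec R ys \<and> (xs \<noteq> [] \<longrightarrow> ys \<noteq> [] \<longrightarrow> R (last xs) (hd ys))"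
  by (induction xs) (auto simp: consec_Cons)

lemma consec_iff: "consec R xs \<longleftrightarrow> (\<forall>i. Suc i < length xs \<longrightarrow> R (xs!i) (xs!Suc i))"
proof (induction xs)
  case (Cons x ys)
  show ?case
  proof
    assume a: "consec R (x # ys)"
    show "\<forall>i. Suc i < length (x # ys) \<longrightarrow> R ((x # ys) ! i) ((x # ys) ! Suc i)"
    proof (intro allI impI)
      fix i assume i: "Suc i < length (x # ys)"
      show "R ((x # ys) ! i) ((x # ys) ! Suc i)"
      proof (cases i)
        case 0 thus ?thesis using a i by (cases ys) auto
      next
        case (Suc j) thus ?thesis using a i Cons.IH by (auto simp: consec_Cons)
      qed
    qed
  next
    assume a: "\<forall>i. Suc i < length (x # ys) \<longrightarrow> R ((x # ys) ! i) ((x # ys) ! Suc i)"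
    have "consec R ys" using Cons.IH a by (metis Suc_less_eq length_Cons nth_Cons_Suc)
    moreover have "ys \<noteq> [] \<longrightarrow> R x (hd ys)" using a[rule_format, of 0] by (cases ys) auto
    ultimately show "consec R (x # ys)" by (simp add: consec_Cons)
  qed
qed simp

lemma is_path_iff: "is_path V E ps \<longleftrightarrow> ps \<noteq> [] \<and> distinct ps \<and> set ps \<subseteq> V \<and> chain E ps"
  unfolding is_path_def consec_iff by auto

lemma straight_fst: "wrun P w L \<Longrightarrow> fst w = 0 \<Longrightarrow> x \<in> set L \<Longrightarrow> fst (P x) = fst (P (hd L))"
proof (induction "\<lambda>x y. P y - P x = w" L rule: consec.induct)
  case (1 a b r)
  show ?case
  proof (cases "x = a")
    case False
    hence "x \<in> set (b # r)" using 1 by auto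
    hence "fst (P x) = fst (P b)" using 1 by auto
    moreover have "fst (P b - P a) = 0" using 1 by simp
    hence "fst (P b) = fst (P a)" by simp
    ultimately show ?thesis by simp
  qed simp
qed auto

lemma straight_snd: "wrun P w L \<Longrightarrow> snd w = 0 \<Longrightarrow> x \<in> set L \<Longrightarrow> snd (P x) = snd (P (hd L))"
proof (induction "\<lambda>x y. P y - P x = w" L rule: consec.induct)
  case (1 a b r)
  show ?case
  proof (cases "x = a")
    case False
    hence "x \<in> set (b # r)" using 1 by auto
    hence "snd (P x) = snd (P b)" using 1 by auto
    moreover have "snd (P b - P a) = 0" using 1 by simp
    hence "snd (P b) = snd (P a)" by simp
    ultimately show ?thesis by simp
  qed simp
qed auto

lemma comp_trans: "c \<in> comp F b \<Longrightarrow> b \<in> comp F a \<Longrightarrow> c \<in> comp F a"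
  by (auto simp: comp_def)

lemma chain_reach: "chain F L \<Longrightarrow> L \<noteq> [] \<Longrightarrow> last L \<in> comp F (hd L)"
proof (induction "\<lambda>x y. {x,y} \<in> F" L rule: consec.induct)
  case (1 a b r)
  have "last (b # r) \<in> comp F b" using 1 by auto
  moreover have "b \<in> comp F a" using 1 comp_step[OF comp_refl] by auto
  ultimately show ?case using comp_trans by fastforce
qed (auto simp: comp_refl)

lemma chain_remove: assumes "chain F L" "distinct L" "length L \<ge> 3"
  shows "chain (F - {{hd L, last L}}) L"
proof -
  let ?n = "length L"
  have ne: "L \<noteq> []" using assms(3) by auto
  have hl: "hd L = L!0" "last L = L!(?n - 1)" using hd_conv_nth[OF ne] last_conv_nth[OF ne] by auto
  show ?thesis unfolding consec_iff
  proof (intro allI impI)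
    fix i assume i: "Suc i < ?n"
    have e: "{L!i, L!Suc i} \<in> F" using assms(1) i by (simp add: consec_iff)
    have "{L!i, L!Suc i} \<noteq> {L!0, L!(?n - 1)}"
    proof
      assume "{L!i, L!Suc i} = {L!0, L!(?n - 1)}"
      hence "(L!i = L!0 \<and> L!Suc i = L!(?n-1)) \<or> (L!i = L!(?n-1) \<and> L!Suc i = L!0)"
        by (auto simp: doubleton_eq_iff)
      moreover have "i < ?n" "Suc i < ?n" "0 < ?n" "?n - 1 < ?n" using i by auto
      ultimately have "(i = 0 \<and> Suc i = ?n - 1) \<or> (i = ?n - 1 \<and> Suc i = 0)"
        using nth_eq_iff_index_eq[OF assms(2)] by metis
      thus False using i assms(3) by auto
    qed
    thus "{L!i, L!Suc i} \<in> F - {{hd L, last L}}" using e hl by auto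
  qed
qed

lemma hd_filter: "xs \<noteq> [] \<Longrightarrow> P (hd xs) \<Longrightarrow> hd (filter P xs) = hd xs"
  by (cases xs) auto

lemma last_filter: "xs \<noteq> [] \<Longrightarrow> P (last xs) \<Longrightarrow> last (filter P xs) = last xs"
  by (induction xs rule: rev_induct) auto

lemma distinct_hd_last: "distinct L \<Longrightarrow> length L \<ge> 2 \<Longrightarrow> hd L \<noteq> last L"
  by (cases L) (auto simp: last_conv_nth)



locale proc =
  fixes \<sigma> :: "'a growth" and u0 :: 'a
  assumes V0: "g_V \<sigma> 0 = {u0}" and E0: "g_E \<sigma> 0 = {}"
    and steps: "\<And>t. t \<in> {1..g_tf \<sigma>} \<Longrightarrow> growth_step u0 (g_V \<sigma> (t - 1)) (g_E \<sigma> (t - 1)) (g_pos \<sigma> (t - 1))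
         (g_dir \<sigma> t) (g_ops \<sigma> t) (g_new \<sigma> t) (g_V \<sigma> t) (g_E \<sigma> t) (g_pos \<sigma> t)"
begin

abbreviation "VV \<equiv> g_V \<sigma>"
abbreviation "EE \<equiv> g_E \<sigma>"
abbreviation "PP \<equiv> g_pos \<sigma>"
abbreviation "tf \<equiv> g_tf \<sigma>"
abbreviation fl where "fl t L \<equiv> filter (\<lambda>x. x \<in> g_V \<sigma> t) L"

definition pathat :: "nat \<Rightarrow> 'a list \<Rightarrow> bool" where
  "pathat t L \<longleftrightarrow> L \<noteq> [] \<and> distinct L \<and> set L \<subseteq> VV t \<and> chain (EE t) L \<and> hd L = u0"

lemma good_t: "t \<le> tf \<Longrightarrow> good (VV t) (EE t) (PP t)"
proof (induction t)
  case 0 thus ?case using V0 E0 by (simp add: good_def)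
next
  case (Suc t)
  have "gstep u0 (VV t) (EE t) (PP t) (g_dir \<sigma> (Suc t)) (g_ops \<sigma> (Suc t)) (g_new \<sigma> (Suc t)) (VV (Suc t)) (EE (Suc t)) (PP (Suc t))"
    using steps[of "Suc t"] Suc by unfold_locales auto
  thus ?case by (rule gstep.good')
qed

lemma gst: "1 \<le> t \<Longrightarrow> t \<le> tf \<Longrightarrow> gstep u0 (VV (t-1)) (EE (t-1)) (PP (t-1)) (g_dir \<sigma> t) (g_ops \<sigma> t) (g_new \<sigma> t) (VV t) (EE t) (PP t)"
  using steps[of t] good_t[of "t-1"] by unfold_locales auto

lemma Vmono1: "1 \<le> t \<Longrightarrow> t \<le> tf \<Longrightarrow> VV (t-1) \<subseteq> VV t"
  using gstep.V'_eq[OF gst] by blast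

lemma Vmono: "t' \<le> t \<Longrightarrow> t \<le> tf \<Longrightarrow> VV t' \<subseteq> VV t"
proof (induction t rule: dec_induct)
  case (step n)
  have "VV n \<subseteq> VV (Suc n)" using Vmono1[of "Suc n"] step by simp
  thus ?case using step by simp
qed simp

lemma u0V: "t \<le> tf \<Longrightarrow> u0 \<in> VV t" using Vmono[of 0 t] V0 by auto

lemma filt:
  assumes t: "1 \<le> t" "t \<le> tf"
  shows "chain (EE t) ps \<Longrightarrow> distinct ps \<Longrightarrow> set ps \<subseteq> VV t \<Longrightarrow> ps \<noteq> [] \<Longrightarrow> hd ps \<in> VV (t-1) \<Longrightarrow>
    chain (EE (t-1)) (fl (t-1) ps) \<and>
    (last ps \<in> VV (t-1) \<longrightarrow> wrun (PP t) w ps \<longrightarrow> wrun (PP (t-1)) w (fl (t-1) ps))"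
proof (induction "length ps" arbitrary: ps rule: less_induct)
  case less
  interpret G: gstep u0 "VV (t-1)" "EE (t-1)" "PP (t-1)" "g_dir \<sigma> t" "g_ops \<sigma> t" "g_new \<sigma> t" "VV t" "EE t" "PP t"
    using gst t by simp
  obtain x r where ps: "ps = x # r" using less by (cases ps) auto
  have xo: "x \<in> VV(t-1)" using less ps by simp
  show ?case
  proof (cases r)
    case Nil thus ?thesis using ps xo by simp
  next
    case (Cons y r')
    have exy: "{x,y} \<in> EE t" using less ps Cons by simp
    have ch: "chain (EE t) (y # r')" using less ps Cons by simp
    show ?thesis
    proof (cases "y \<in> VV(t-1)")
      case True
      have IH: "chain (EE(t-1)) (fl (t-1) (y#r')) \<and> (last (y#r') \<in> VV (t-1) \<longrightarrow> wrun (PP t) w (y#r') \<longrightarrow> wrun (PP(t-1)) w (fl (t-1) (y#r')))"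
        using less(1)[of "y#r'"] less(3,4) ps Cons True ch by auto
      have e': "{x,y} \<in> EE(t-1)" "PP t y - PP t x = PP(t-1) y - PP(t-1) x" using G.E1[OF exy xo True] by auto
      show ?thesis using IH e' ps Cons True xo by auto
    next
      case False
      have yV: "y \<in> VV t" using less ps Cons by auto
      show ?thesis
      proof (cases r')
        case Nil thus ?thesis using ps Cons False xo by auto
      next
        case (Cons z r'')
        have eyz: "{y,z} \<in> EE t" using ch Cons by simp
        have xz: "x \<noteq> z" using less(3) ps \<open>r = y # r'\<close> Cons by auto
        note E = G.E2[OF yV False exy eyz xz]
        have IH: "chain (EE(t-1)) (fl (t-1) (z#r'')) \<and> (last (z#r'') \<in> VV (t-1) \<longrightarrow> wrun (PP t) w (z#r'') \<longrightarrow> wrun (PP(t-1)) w (fl (t-1) (z#r'')))"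
          using less(1)[of "z#r''"] less(3,4) ps \<open>r = y # r'\<close> Cons ch E(2) by auto
        show ?thesis using IH E ps \<open>r = y # r'\<close> Cons False xo by auto
      qed
    qed
  qed
qed

lemma filt_last:
  assumes t: "1 \<le> t" "t \<le> tf" and ch: "chain (EE t) (L @ [c])" and dis: "distinct (L @ [c])"
    and st: "set (L @ [c]) \<subseteq> VV t" and ne: "L \<noteq> []" and h: "hd L \<in> VV (t-1)" and c: "c \<in> VV (t-1)"
  shows "fl (t-1) L \<noteq> [] \<and> PP (t-1) c - PP (t-1) (last (fl (t-1) L)) = PP t c - PP t (last L)"
proof -
  interpret G: gstep u0 "VV (t-1)" "EE (t-1)" "PP (t-1)" "g_dir \<sigma> t" "g_ops \<sigma> t" "g_new \<sigma> t" "VV t" "EE t" "PP t"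
    using gst t by simp
  obtain L0 y where L: "L = L0 @ [y]" using ne rev_exhaust by blast
  have eyc: "{y,c} \<in> EE t" using ch L by (simp add: consec_append)
  show ?thesis
  proof (cases "y \<in> VV (t-1)")
    case True
    have "PP t c - PP t y = PP (t-1) c - PP (t-1) y" using G.E1[OF eyc True c] by simp
    thus ?thesis using L True by simp
  next
    case False
    have "L0 \<noteq> []" using L h False by auto
    then obtain L1 x where L0: "L0 = L1 @ [x]" using rev_exhaust by blast
    have exy: "{x,y} \<in> EE t" using ch L L0 by (simp add: consec_append)
    have xc: "x \<noteq> c" using dis L L0 by auto
    have yV: "y \<in> VV t" using st L by auto
    note E = G.E2[OF yV False exy eyc xc]
    show ?thesis using L L0 False E by simp
  qed
qed

lemma down:
  assumes "t' \<le> t"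
  shows "t \<le> tf \<Longrightarrow> pathat t (pre @ seg) \<Longrightarrow> seg \<noteq> [] \<Longrightarrow> hd seg \<in> VV t' \<Longrightarrow> last seg \<in> VV t' \<Longrightarrow> wrun (PP t) w seg \<Longrightarrow>
    pathat t' (fl t' pre @ fl t' seg) \<and> wrun (PP t') w (fl t' seg) \<and> hd (fl t' seg) = hd seg \<and> last (fl t' seg) = last seg \<and>
    (pre \<noteq> [] \<longrightarrow> fl t' pre \<noteq> [] \<and> PP t' (hd seg) - PP t' (last (fl t' pre)) = PP t (hd seg) - PP t (last pre))"
  using assms
proof (induction t arbitrary: pre seg rule: dec_induct)
  case base
  have "set (pre @ seg) \<subseteq> VV t'" using base by (simp add: pathat_def)
  hence "fl t' pre = pre" "fl t' seg = seg" by (auto simp: filter_id_conv)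
  thus ?case using base by simp
next
  case (step n)
  let ?t = "Suc n"
  have t: "1 \<le> ?t" "?t \<le> tf" using step by auto
  have sub: "VV t' \<subseteq> VV n" using Vmono step by simp
  have hs: "hd seg \<in> VV n" "last seg \<in> VV n" using step sub by auto
  have P: "pre @ seg \<noteq> []" "distinct (pre @ seg)" "set (pre @ seg) \<subseteq> VV ?t" "chain (EE ?t) (pre @ seg)" "hd (pre @ seg) = u0"
    using step(5) by (auto simp: pathat_def)
  have u0n: "u0 \<in> VV n" using u0V step by simp
  have f1: "chain (EE n) (fl n (pre @ seg))" using filt[OF t, of "pre @ seg"] P u0n by simp
  have hd1: "hd (fl n (pre @ seg)) = u0" using hd_filter[OF P(1), of "\<lambda>x. x \<in> VV n"] P(5) u0n by simp
  have ne1: "fl n (pre @ seg) \<noteq> []" using P(1,5) u0n by (metis filter_empty_conv hd_in_set)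
  have path1: "pathat n (fl n pre @ fl n seg)"
    unfolding pathat_def using f1 hd1 P(2) u0n ne1 by auto
  have segP: "chain (EE ?t) seg" "distinct seg" "set seg \<subseteq> VV ?t" using P by (auto simp: consec_append)
  have w1: "wrun (PP n) w (fl n seg)" using filt[OF t, of seg] segP step hs by simp
  have hl1: "hd (fl n seg) = hd seg" "last (fl n seg) = last seg" "fl n seg \<noteq> []"
    using hd_filter[OF step(6), of "\<lambda>x. x \<in> VV n"] last_filter[OF step(6), of "\<lambda>x. x \<in> VV n"] hs step(6)
    by (auto simp: filter_empty_conv)
  have IH: "pathat t' (fl t' (fl n pre) @ fl t' (fl n seg)) \<and> wrun (PP t') w (fl t' (fl n seg)) \<and> hd (fl t' (fl n seg)) = hd (fl n seg) \<and> last (fl t' (fl n seg)) = last (fl n seg) \<and>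
    (fl n pre \<noteq> [] \<longrightarrow> fl t' (fl n pre) \<noteq> [] \<and> PP t' (hd (fl n seg)) - PP t' (last (fl t' (fl n pre))) = PP n (hd (fl n seg)) - PP n (last (fl n pre)))"
    using step.IH[of "fl n pre" "fl n seg"] step path1 w1 hl1 by simp
  have ff: "\<And>X. fl t' (fl n X) = fl t' X" using sub by (auto simp: filter_filter intro!: filter_cong)
  have turn: "fl n pre \<noteq> [] \<and> PP n (hd seg) - PP n (last (fl n pre)) = PP ?t (hd seg) - PP ?t (last pre)" if pn: "pre \<noteq> []"
  proof -
    have eq: "pre @ seg = (pre @ [hd seg]) @ tl seg" using step(6) by simp
    have "chain (EE ?t) (pre @ [hd seg])" using P(4) unfolding eq consec_append by simp
    moreover have "distinct (pre @ [hd seg])" "set (pre @ [hd seg]) \<subseteq> VV ?t" using P(2,3) eq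
      by (metis distinct_append, metis Un_subset_iff set_append)
    moreover have "hd pre \<in> VV n" using P(5) pn u0n by simp
    ultimately show ?thesis using filt_last[OF t, of pre "hd seg"] pn hs by simp
  qed
  show ?case using IH ff hl1 turn by auto
qed

end


lemma perp_self: "perp w w \<Longrightarrow> w = (0::pt)"
  unfolding perp_def by (cases w) (simp add: zero_prod_def)

lemma perp_neg: "perp d (- d) \<Longrightarrow> d = (0::pt)"
proof -
  assume "perp d (- d)"
  hence "fst d * fst (- d) + snd d * snd (- d) = 0" by (simp add: perp_def)
  hence "fst d * fst d + snd d * snd d = 0" by (simp only: fst_uminus snd_uminus mult_minus_right)
  hence "perp d d" by (simp add: perp_def)
  thus ?thesis by (rule perp_self)
qed

lemma filter_ne: "L \<noteq> [] \<Longrightarrow> P (hd L) \<Longrightarrow> filter P L \<noteq> []"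
  by (cases L) auto

lemma len2: "L \<noteq> [] \<Longrightarrow> hd L \<noteq> last L \<Longrightarrow> 2 \<le> length L"
  by (cases L) (auto, metis One_nat_def Suc_le_eq length_greater_0_conv less_Suc_eq_le)

lemma wrun_last: "wrun P w L \<Longrightarrow> 2 \<le> length L \<Longrightarrow> P (last L) - P (last (butlast L)) = w"
proof -
  assume a: "wrun P w L" "2 \<le> length L"
  then obtain L' x where L: "L = L' @ [x]" by (metis le_zero_eq length_0_conv rev_exhaust zero_neq_numeral)
  have "L' \<noteq> []" using a L by auto
  thus ?thesis using a(1) L by (simp add: consec_append)
qed

lemma straight_wrun: "wrun P w L \<Longrightarrow> fst w = 0 \<or> snd w = 0 \<Longrightarrow>
   (\<forall>x\<in>set L. fst (P x) = fst (P (hd L))) \<or> (\<forall>x\<in>set L. snd (P x) = snd (P (hd L)))"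
  using straight_fst[of P w L] straight_snd[of P w L] by blast

context proc begin

lemma pathat_prefix: "pathat t (X @ Y) \<Longrightarrow> X \<noteq> [] \<Longrightarrow> pathat t X"
  unfolding pathat_def by (auto simp: consec_append)

lemma pathat_suffix: "pathat t (X @ Y) \<Longrightarrow> Y \<noteq> [] \<Longrightarrow> is_path (VV t) (EE t) Y"
  unfolding pathat_def is_path_iff by (auto simp: consec_append)

lemma core:
  "t \<le> tf \<Longrightarrow> pathat t (pre @ seg) \<Longrightarrow> 2 \<le> length seg \<Longrightarrow> wrun (PP t) w seg \<Longrightarrow>
    (pre \<noteq> [] \<Longrightarrow> perp (PP t (hd seg) - PP t (last pre)) w) \<Longrightarrow> w \<noteq> 0 \<Longrightarrow> fst w = 0 \<or> snd w = 0 \<Longrightarrow>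
    \<exists>s g. 1 \<le> s \<and> s \<le> t \<and> gen_at \<sigma> s g (last seg) \<and> (g = hd seg \<or> gen_chain \<sigma> (hd seg) g) \<and>
       on_common_segment (VV s) (EE s) (PP s) {hd seg, g, last seg}"
proof (induction t arbitrary: pre seg rule: less_induct)
  case (less t)
  define c where "c = hd seg"
  define b where "b = last seg"
  have segne: "seg \<noteq> []" using less.prems(3) by auto
  have P: "distinct (pre @ seg)" "set (pre @ seg) \<subseteq> VV t" "chain (EE t) (pre @ seg)" "hd (pre @ seg) = u0"
    using less.prems(2) by (auto simp: pathat_def)
  have cb: "c \<noteq> b" using distinct_hd_last[of seg] P(1) less.prems(3) c_def b_def by auto
  have cseg: "c \<in> set seg" "b \<in> set seg" using segne c_def b_def by auto
  have bV: "b \<in> VV t" using P(2) cseg by auto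
  have cV: "c \<in> VV t" using P(2) cseg by auto
  have cpre: "pre = [] \<Longrightarrow> c = u0" using P(4) c_def by simp
  have hdpre: "pre \<noteq> [] \<Longrightarrow> hd pre = u0" using P(4) by simp
  have bu: "b \<noteq> u0"
  proof (cases "pre = []")
    case True thus ?thesis using cpre cb by simp
  next
    case False
    hence "u0 \<in> set pre" using hdpre hd_in_set by metis
    thus ?thesis using P(1) cseg by auto
  qed
  have cu: "pre \<noteq> [] \<Longrightarrow> c \<noteq> u0"
  proof -
    assume ne: "pre \<noteq> []"
    hence "u0 \<in> set pre" using hdpre hd_in_set by metis
    thus ?thesis using P(1) cseg by auto
  qed
  define s where "s = (LEAST s. b \<in> VV s)"
  have bs: "b \<in> VV s" unfolding s_def using bV by (rule LeastI)
  have sle: "s \<le> t" unfolding s_def using bV by (rule Least_le)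
  have s0: "s \<noteq> 0" using bs bu V0 by (cases s) auto
  have bs1: "b \<notin> VV (s-1)" unfolding s_def using s0 s_def not_less_Least[of "s-1" "\<lambda>s. b \<in> VV s"] by auto
  have s1: "1 \<le> s" "s \<le> tf" using s0 sle less.prems(1) by auto
  define r where "r = (LEAST r. c \<in> VV r)"
  have cr: "c \<in> VV r" unfolding r_def using cV by (rule LeastI)
  have rle: "r \<le> t" unfolding r_def using cV by (rule Least_le)
  have rs: "r < s"
  proof (rule ccontr)
    assume "\<not> r < s"
    hence sr: "s \<le> r" by simp
    have r1: "1 \<le> r" "r \<le> tf" using sr s0 rle less.prems(1) by auto
    have cr1: "c \<notin> VV (r-1)" unfolding r_def using r1 r_def not_less_Least[of "r-1" "\<lambda>r. c \<in> VV r"] by auto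
    have pne: "pre \<noteq> []" using cpre cr1 u0V r1 by auto
    have br: "b \<in> VV r" using Vmono[of s r] sr r1 bs by auto
    note D = down[OF rle less.prems(1) less.prems(2) segne, of w] 
    have D': "pathat r (fl r pre @ fl r seg)" "wrun (PP r) w (fl r seg)" "hd (fl r seg) = c" "last (fl r seg) = b"
      "fl r pre \<noteq> []" "PP r c - PP r (last (fl r pre)) = PP t c - PP t (last pre)"
      using D cr br less.prems(4) pne c_def b_def by auto
    define Q where "Q = fl r seg"
    have Qne: "Q \<noteq> []" using filter_ne[OF segne, of "\<lambda>x. x \<in> VV r"] cr c_def Q_def by simp
    obtain y rest where Q: "Q = c # y # rest"
    proof (cases Q)
      case (Cons a l)
      hence "a = c" using D'(3) Q_def by simp
      moreover have "l \<noteq> []" using Cons D'(3,4) cb Q_def by auto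
      ultimately show ?thesis using that Cons by (cases l) auto
    qed (use Qne in simp)
    define x where "x = last (fl r pre)"
    have ch: "chain (EE r) (fl r pre @ Q)" using D'(1) Q_def by (simp add: pathat_def)
    have exc: "{x,c} \<in> EE r" using ch Q D'(5) x_def by (simp add: consec_append)
    have ecy: "{c,y} \<in> EE r" using ch Q by (simp add: consec_append)
    have xy: "x \<noteq> y"
    proof -
      have "x \<in> set (fl r pre)" unfolding x_def by (rule last_in_set) (rule D'(5))
      moreover have "y \<in> set Q" using Q by simp
      moreover have "distinct (fl r pre @ Q)" using D'(1) Q_def by (simp add: pathat_def)
      ultimately show ?thesis by auto
    qed
    interpret G: gstep u0 "VV (r-1)" "EE (r-1)" "PP (r-1)" "g_dir \<sigma> r" "g_ops \<sigma> r" "g_new \<sigma> r" "VV r" "EE r" "PP r"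
      using gst r1 by simp
    note E = G.E2[OF cr cr1 exc ecy xy]
    have "PP r y - PP r c = w" using D'(2) Q Q_def by simp
    hence "PP r c - PP r x = w" using E(4,5) by simp
    hence "perp w w" using less.prems(5)[OF pne] D'(6) x_def c_def by simp
    thus False using perp_self less.prems(6) by blast
  qed
  have "r \<le> s - 1" "s - 1 \<le> tf" using rs s1 by auto
  hence cs1: "c \<in> VV (s-1)" using Vmono[of r "s-1"] cr by auto
  note Ds0 = down[OF sle less.prems(1) less.prems(2) segne, of w]
  define qp where "qp = fl s pre"
  define qs where "qs = fl s seg"
  have cs: "c \<in> VV s" using cs1 Vmono1 s1 by auto
  have Ds: "pathat s (qp @ qs)" "wrun (PP s) w qs" "hd qs = c" "last qs = b"
     "qp \<noteq> [] \<Longrightarrow> PP s c - PP s (last qp) = PP t c - PP t (last pre)" "qp \<noteq> [] \<Longrightarrow> pre \<noteq> []"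
    using Ds0 cs bs less.prems(4) c_def b_def qp_def qs_def by auto
  have qsne: "qs \<noteq> []" using filter_ne[OF segne, of "\<lambda>x. x \<in> VV s"] cs c_def qs_def by simp
  obtain qsv where qs: "qs = qsv @ [b]" and qsvne: "qsv \<noteq> []"
  proof -
    obtain qsv b' where "qs = qsv @ [b']" using qsne rev_exhaust by blast
    moreover have "b' = b" using calculation Ds(4) by simp
    moreover have "qsv \<noteq> []" using calculation Ds(3) cb by auto
    ultimately show ?thesis using that by blast
  qed
  have hqsv: "hd qsv = c" using Ds(3) qs qsvne by simp
  define p where "p = last qsv"
  interpret G: gstep u0 "VV (s-1)" "EE (s-1)" "PP (s-1)" "g_dir \<sigma> s" "g_ops \<sigma> s" "g_new \<sigma> s" "VV s" "EE s" "PP s"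
    using gst s1 by simp
  obtain g where g: "g \<in> g_ops \<sigma> s" "b = g_new \<sigma> s g" using G.new_obtain bs bs1 by metis
  have gV: "g \<in> VV (s-1)" using g G.Ops_sub by auto
  have gen: "gen_at \<sigma> s g b" using g s1 by (simp add: gen_at_def)
  have pathqs: "pathat s (qp @ qsv @ [b])" using Ds(1) qs by simp
  have epb: "{p,b} \<in> EE s" using pathqs qsvne p_def by (simp add: pathat_def consec_append)
  have pg: "p = g \<or> (G.sd g \<and> p = G.tg g)" using G.Enew[OF g(1)] epb g(2) by simp
  have wqs: "wrun (PP s) w qsv" "PP s b - PP s p = w" using Ds(2) qs qsvne p_def by (auto simp: consec_append)
  have ispqs: "is_path (VV s) (EE s) qs" using pathat_suffix[OF Ds(1) qsne] .
  have stqs: "straight_segment (VV s) (EE s) (PP s) qs"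
    using ispqs straight_wrun[OF Ds(2) less.prems(7)] by (simp add: straight_segment_def)
  have turn_s1: "perp (PP (s-1) c - PP (s-1) (last (fl (s-1) qp))) w"
    if "fl (s-1) qp \<noteq> []" "PP (s-1) c - PP (s-1) (last (fl (s-1) qp)) = PP s c - PP s (last qp)" for dummy :: bool
  proof -
    have "qp \<noteq> []" using that(1) by auto
    thus ?thesis using that(2) Ds(5,6) less.prems(5) c_def by simp
  qed
  show ?case
  proof (cases "p = g")
    case True
    show ?thesis
    proof (cases "g = c")
      case True
      have "on_common_segment (VV s) (EE s) (PP s) {c, g, b}"
        unfolding on_common_segment_def using stqs Ds(3,4) qsne True by (intro exI[of _ qs]) auto
      thus ?thesis using gen s1 sle True c_def b_def by blast
    next
      case False
      have lq: "last qsv = g" using p_def \<open>p = g\<close> by simp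
      have pre1: "pathat s (qp @ qsv)" using pathat_prefix[of s "qp @ qsv" "[b]"] pathqs qsvne by simp
      note D1 = down[of "s-1" s qp qsv w, OF _ s1(2) pre1 qsvne, unfolded hqsv lq]
      have D1': "pathat (s-1) (fl (s-1) qp @ fl (s-1) qsv)" "wrun (PP (s-1)) w (fl (s-1) qsv)"
        "hd (fl (s-1) qsv) = c" "last (fl (s-1) qsv) = g"
        "qp \<noteq> [] \<Longrightarrow> fl (s-1) qp \<noteq> [] \<and> PP (s-1) c - PP (s-1) (last (fl (s-1) qp)) = PP s c - PP s (last qp)"
        using D1 cs1 gV wqs(1) by auto
      have fne: "fl (s-1) qsv \<noteq> []" using filter_ne[OF qsvne, of "\<lambda>x. x \<in> VV (s-1)"] hqsv cs1 by simp
      have l2: "2 \<le> length (fl (s-1) qsv)" using len2[OF fne] D1'(3,4) False by simp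
      have turn: "fl (s-1) qp \<noteq> [] \<Longrightarrow> perp (PP (s-1) (hd (fl (s-1) qsv)) - PP (s-1) (last (fl (s-1) qp))) w"
      proof -
        assume a: "fl (s-1) qp \<noteq> []"
        hence "qp \<noteq> []" by auto
        thus ?thesis using turn_s1 D1'(5) D1'(3) a by simp
      qed
      have "s - 1 < t" "s - 1 \<le> tf" using s1 sle by auto
      from less.IH[OF this D1'(1) l2 D1'(2) turn less.prems(6,7)] s1
      obtain s' g' where ih: "gen_at \<sigma> s' g' g" "g' = c \<or> gen_chain \<sigma> c g'"
        using D1'(3,4) by auto
      have "(g', g) \<in> gen_rel \<sigma>" using ih(1) by (auto simp: gen_rel_def)
      hence gc: "gen_chain \<sigma> c g" using ih(2) unfolding gen_chain_def by auto
      have "on_common_segment (VV s) (EE s) (PP s) {c, g, b}"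
        unfolding on_common_segment_def using stqs Ds(3,4) qsne qs lq qsvne
        by (intro exI[of _ qs]) auto
      thus ?thesis using gen s1 sle gc c_def b_def by blast
    qed
  next
    case False
    have sdg: "G.sd g" and pv: "p = G.tg g" using pg False by auto
    define v where "v = G.tg g"
    define dd where "dd = g_dir \<sigma> s"
    have vV: "v \<in> VV (s-1)" using G.tg_V sdg v_def by auto
    have gv: "g \<noteq> v" using G.tg_ne sdg v_def by metis
    have Pb: "PP s v - PP s b = dd" using G.Pnew2'[OF g(1) sdg] g(2) v_def dd_def by simp
    have Pg: "PP s b - PP s g = dd" using G.Pnew'[OF g(1)] g(2) dd_def by simp
    have pv0: "PP (s-1) v = PP (s-1) g + dd" using G.tgt(2)[OF sdg] v_def dd_def by simp
    have evg: "{v, g} \<in> EE (s-1)" using G.tgt(1)[OF sdg] v_def by (simp add: insert_commute)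
    have wd: "w = - dd" using wqs(2) pv v_def Pb by (metis minus_diff_eq)
    have dnz: "dd \<noteq> 0" using G.d_nz dd_def by simp
    have dneg: "dd \<noteq> - dd" using G.d_neg dd_def by simp
    have lq: "last qsv = v" using p_def pv v_def by simp
    have pre1: "pathat s (qp @ qsv)" using pathat_prefix[of s "qp @ qsv" "[b]"] pathqs qsvne by simp
    note D1 = down[of "s-1" s qp qsv w, OF _ s1(2) pre1 qsvne, unfolded hqsv lq]
    define Fp where "Fp = fl (s-1) qp"
    define Fq where "Fq = fl (s-1) qsv"
    have D1': "pathat (s-1) (Fp @ Fq)" "wrun (PP (s-1)) w Fq" "hd Fq = c" "last Fq = v"
        "qp \<noteq> [] \<Longrightarrow> Fp \<noteq> [] \<and> PP (s-1) c - PP (s-1) (last Fp) = PP s c - PP s (last qp)"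
      using D1 cs1 vV wqs(1) Fp_def Fq_def by auto
    have fne: "Fq \<noteq> []" using filter_ne[OF qsvne, of "\<lambda>x. x \<in> VV (s-1)"] hqsv cs1 Fq_def by simp
    have turn: "Fp \<noteq> [] \<Longrightarrow> perp (PP (s-1) c - PP (s-1) (last Fp)) w"
    proof -
      assume a: "Fp \<noteq> []"
      hence "qp \<noteq> []" using Fp_def by auto
      thus ?thesis using turn_s1 D1'(5) a Fp_def by simp
    qed
    have pA: "distinct (Fp @ Fq)" "set (Fp @ Fq) \<subseteq> VV (s-1)" "chain (EE (s-1)) (Fp @ Fq)" "hd (Fp @ Fq) = u0"
      using D1'(1) by (auto simp: pathat_def)
    have lastA: "last (Fp @ Fq) = v" using fne D1'(4) by simp
    have gA: "g \<notin> set (Fp @ Fq)"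
    proof
      assume gin: "g \<in> set (Fp @ Fq)"
      obtain A1 A2 where A: "Fp @ Fq = A1 @ g # A2" using split_list[OF gin] by blast
      have A2ne: "A2 \<noteq> []" using A lastA gv by (cases A2) auto
      have chA2: "chain (EE(s-1)) (g # A2)" using pA(3) A by (simp add: consec_append)
      have dA2: "distinct (g # A2)" using pA(1) A by simp
      have lA2: "last (g # A2) = v" using A lastA A2ne by simp
      show False
      proof (cases "3 \<le> length (g # A2)")
        case True
        have "chain (EE(s-1) - {{g, v}}) (g # A2)" using chain_remove[OF chA2 dA2 True] lA2 by simp
        hence "v \<in> comp (EE(s-1) - {{g, v}}) g" using chain_reach[of "EE(s-1) - {{g, v}}" "g # A2"] lA2 by simp
        thus False using G.notcomp[OF g(1) sdg] v_def by simp
      next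
        case False
        hence A2v: "A2 = [v]" using A2ne lA2 by (cases A2) (auto simp: Suc_le_eq)
        have bl: "last (butlast (Fp @ Fq)) = g" using A A2v by (simp add: butlast_append)
        have pg': "PP (s-1) v - PP (s-1) g = dd" using pv0 by simp
        show False
        proof (cases "2 \<le> length Fq")
          case True
          have "butlast Fq \<noteq> []" using True by (cases Fq) auto
          hence "last (butlast Fq) = g" using bl fne by (simp add: butlast_append)
          hence "PP (s-1) v - PP (s-1) g = w" using wrun_last[OF D1'(2) True] D1'(4) by simp
          thus False using pg' wd dneg by simp
        next
          case False
          hence Fqv: "Fq = [v]" using fne D1'(4) by (cases Fq) (auto simp: Suc_le_eq)
          hence cv: "c = v" using D1'(3) by simp
          have "butlast (Fp @ Fq) = Fp" using Fqv by (simp add: butlast_append)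
          moreover have "butlast (Fp @ Fq) = A1 @ [g]" using A A2v by (simp add: butlast_append)
          ultimately have Fpl: "Fp \<noteq> []" "last Fp = g" by auto
          have "perp (PP (s-1) c - PP (s-1) (last Fp)) w" using turn Fpl by simp
          hence "perp dd (- dd)" using cv Fpl pg' wd by simp
          thus False using perp_neg dnz by blast
        qed
      qed
    qed
    have hh: "hd (Fp @ Fq @ [g]) = hd (Fp @ Fq)" using fne by (cases Fp; cases Fq) auto
    have path2: "pathat (s-1) (Fp @ (Fq @ [g]))"
      unfolding pathat_def using pA gA gV lastA evg fne hh by (auto simp: consec_append)
    have l2: "2 \<le> length (Fq @ [g])" using fne by (cases Fq) auto
    have w2: "wrun (PP (s-1)) w (Fq @ [g])" using D1'(2,4) fne pv0 wd by (simp add: consec_append)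
    have turn2: "Fp \<noteq> [] \<Longrightarrow> perp (PP (s-1) (hd (Fq @ [g])) - PP (s-1) (last Fp)) w"
      using turn D1'(3) fne by simp
    have "s - 1 < t" "s - 1 \<le> tf" using s1 sle by auto
    from less.IH[OF this path2 l2 w2 turn2 less.prems(6,7)]
    obtain s' g' where ih: "gen_at \<sigma> s' g' g" "g' = c \<or> gen_chain \<sigma> c g'"
      using D1'(3) fne by auto
    have "(g', g) \<in> gen_rel \<sigma>" using ih(1) by (auto simp: gen_rel_def)
    hence gc: "gen_chain \<sigma> c g" using ih(2) unfolding gen_chain_def by auto
    have gb: "g \<noteq> b" using gV bs1 by auto
    have gqs: "g \<notin> set qs"
    proof
      assume "g \<in> set qs"
      hence "g \<in> set qsv" using qs gb by auto
      hence "g \<in> set Fq" using gV Fq_def by simp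
      thus False using gA by simp
    qed
    have gVs: "g \<in> VV s" using gV Vmono1 s1 by auto
    have ebg: "{b, g} \<in> EE s" using G.Enew_mem(1)[OF g(1)] g(2) by (simp add: insert_commute)
    have isp: "is_path (VV s) (EE s) (qs @ [g])"
      using ispqs gqs gVs ebg Ds(4) qsne by (auto simp: is_path_iff consec_append)
    have "PP s g - PP s b = - dd" using Pg by (metis minus_diff_eq)
    hence w3: "wrun (PP s) w (qs @ [g])" using Ds(2,4) qsne wd by (simp add: consec_append)
    have "straight_segment (VV s) (EE s) (PP s) (qs @ [g])"
      using isp straight_wrun[OF w3 less.prems(7)] by (simp add: straight_segment_def)
    hence "on_common_segment (VV s) (EE s) (PP s) {c, g, b}"
      unfolding on_common_segment_def using Ds(3,4) qsne
      by (intro exI[of _ "qs @ [g]"]) auto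
    thus ?thesis using gen s1 sle gc c_def b_def by blast
  qed
qed

end


lemma unit_cases: "\<bar>a\<bar> + \<bar>b\<bar> = (1::int) \<Longrightarrow> (a = 1 \<and> b = 0) \<or> (a = -1 \<and> b = 0) \<or> (a = 0 \<and> b = 1) \<or> (a = 0 \<and> b = -1)"
  by arith

lemma unit_par: assumes "\<bar>fst u\<bar> + \<bar>snd u\<bar> = (1::int)" "\<bar>fst v\<bar> + \<bar>snd v\<bar> = 1" "\<not> perp u v"
  shows "u = v \<or> u = - v"
proof -
  obtain a b where u: "u = (a,b)" by (cases u)
  obtain c d where v: "v = (c,d)" by (cases v)
  show ?thesis using unit_cases[of a b] unit_cases[of c d] assms u v by (auto simp: perp_def)
qed

lemma grid_unit: "grid_adj p q \<Longrightarrow> \<bar>fst (q - p)\<bar> + \<bar>snd (q - p)\<bar> = 1"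
  unfolding grid_adj_def by (simp add: abs_minus_commute)

lemma unit_nz: "\<bar>fst u\<bar> + \<bar>snd u\<bar> = (1::int) \<Longrightarrow> u \<noteq> 0 \<and> (fst u = 0 \<or> snd u = 0)"
  using unit_cases[of "fst u" "snd u"] by (auto simp: zero_prod_def)

lemma sorted_idx: assumes "sorted_wrt (<) (xs::nat list)" "i < length xs" "j < length xs" "xs!i < xs!j" shows "i < j"
proof (rule ccontr)
  assume "\<not> i < j"
  hence "j < i \<or> j = i" by auto
  thus False using assms sorted_wrt_nth_less[OF assms(1), of j i] by auto
qed

theorem lemma3p2:
  fixes V :: "'a set" and E :: "'a set set" and pos :: "'a \<Rightarrow> int \<times> int"
    and \<sigma> :: "'a growth" and u0 :: 'a and ps :: "'a list"
  assumes "tree_shape V E pos"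
    and "u0 \<in> V"
    and "grows_from_single \<sigma> u0 V E pos"
    and "root_leaf_path V E u0 ps"
  shows "\<forall>i. Suc i < length (turning_points pos ps) \<longrightarrow>
           maps_to \<sigma> (turning_points pos ps ! i) (turning_points pos ps ! Suc i)"
proof (intro allI impI)
  fix i assume i: "Suc i < length (turning_points pos ps)"
  interpret proc \<sigma> u0 using assms(3) by unfold_locales (auto simp: grows_from_single_def)
  have VE: "VV tf = V" "EE tf = E" using assms(3) by (auto simp: grows_from_single_def)
  obtain c0 where c0: "\<forall>x\<in>V. PP tf x = pos x + c0" using assms(3) by (auto simp: grows_from_single_def)
  have sh: "is_shape V E pos" using assms(1) by (simp add: tree_shape_def)
  have injp: "inj_on pos V" using sh by (simp add: is_shape_def)
  have pth: "is_path V E ps" "hd ps = u0" using assms(4) by (auto simp: root_leaf_path_def)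
  have psP: "ps \<noteq> []" "distinct ps" "set ps \<subseteq> V" "chain E ps" using pth(1) by (auto simp: is_path_iff)
  define n where "n = length ps"
  define idx where "idx = filter (is_turning pos ps) [0..<n]"
  have tp: "turning_points pos ps = map (\<lambda>k. ps!k) idx" by (simp add: turning_points_def idx_def n_def)
  have li: "Suc i < length idx" using i tp by simp
  have sidx: "sorted_wrt (<) idx" unfolding idx_def by (intro sorted_wrt_filter) (simp add: sorted_wrt_upt)
  define a where "a = idx ! i"
  define b where "b = idx ! Suc i"
  have ab: "a < b" using sorted_wrt_nth_less[OF sidx, of i "Suc i"] li a_def b_def by simp
  have inidx: "idx!m < n \<and> is_turning pos ps (idx!m)" if "m < length idx" for m
  proof -
    have "idx!m \<in> set idx" using that by (rule nth_mem)
    thus ?thesis by (simp add: idx_def)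
  qed
  have bn: "b < n" using inidx li b_def by simp
  have ta: "is_turning pos ps a" using inidx li a_def by simp
  have between: "\<And>k. a < k \<Longrightarrow> k < b \<Longrightarrow> \<not> is_turning pos ps k"
  proof
    fix k assume k: "a < k" "k < b" "is_turning pos ps k"
    have "k \<in> set idx" using k bn unfolding idx_def by simp
    then obtain m where m: "m < length idx" "idx ! m = k" by (metis in_set_conv_nth)
    have "i < m" using sorted_idx[OF sidx _ m(1)] li k m a_def by simp
    moreover have "m < Suc i" using sorted_idx[OF sidx m(1) li] k m b_def by simp
    ultimately show False by simp
  qed
  define vec where "vec k = pos (ps ! Suc k) - pos (ps ! k)" for k
  have unit: "\<And>k. Suc k < n \<Longrightarrow> \<bar>fst (vec k)\<bar> + \<bar>snd (vec k)\<bar> = 1"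
  proof -
    fix k assume k: "Suc k < n"
    have "{ps!k, ps!Suc k} \<in> E" using psP(4) k n_def by (simp add: consec_iff)
    moreover have "\<forall>e\<in>E. \<exists>x y. e = {x, y} \<and> x \<noteq> y \<and> x \<in> V \<and> y \<in> V \<and> grid_adj (pos x) (pos y)"
      using sh by (simp add: is_shape_def)
    ultimately obtain x y where "{ps!k, ps!Suc k} = {x,y}" "grid_adj (pos x) (pos y)" by meson
    hence "grid_adj (pos (ps!k)) (pos (ps!Suc k))"
      by (auto simp: doubleton_eq_iff grid_adj_def abs_minus_commute)
    thus "\<bar>fst (vec k)\<bar> + \<bar>snd (vec k)\<bar> = 1" using grid_unit vec_def by simp
  qed
  have PPd: "\<And>k l. k < n \<Longrightarrow> l < n \<Longrightarrow> PP tf (ps!l) - PP tf (ps!k) = pos (ps!l) - pos (ps!k)"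
  proof -
    fix k l assume "k < n" "l < n"
    hence "ps!k \<in> V" "ps!l \<in> V" using psP(3) nth_mem n_def by (metis subsetD)+
    thus "PP tf (ps!l) - PP tf (ps!k) = pos (ps!l) - pos (ps!k)" using c0 by simp
  qed
  have same: "\<And>k. a < k \<Longrightarrow> k < b \<Longrightarrow> vec (k - 1) = vec k"
  proof -
    fix k assume k: "a < k" "k < b"
    have nt: "\<not> perp (vec (k-1)) (vec k)" using between[OF k] bn k vec_def n_def by (auto simp: is_turning_def)
    have u1: "\<bar>fst (vec (k-1))\<bar> + \<bar>snd (vec (k-1))\<bar> = 1" "\<bar>fst (vec k)\<bar> + \<bar>snd (vec k)\<bar> = 1"
      using unit k bn by auto
    have "vec (k-1) \<noteq> - vec k"
    proof
      assume "vec (k-1) = - vec k"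
      moreover have "Suc (k-1) = k" using k by simp
      ultimately have "pos (ps!k) - pos (ps!(k-1)) = pos (ps!k) - pos (ps!Suc k)" unfolding vec_def by simp
      hence "pos (ps ! (Suc k)) = pos (ps ! (k - 1))" by (simp add: algebra_simps)
      moreover have "ps ! Suc k \<in> V" "ps ! (k-1) \<in> V" using psP(3) k bn n_def by auto
      ultimately have "ps ! Suc k = ps ! (k-1)" using injp by (auto dest: inj_onD)
      moreover have "Suc k < length ps" "k - 1 < length ps" using k bn n_def by auto
      ultimately show False using nth_eq_iff_index_eq[OF psP(2), of "Suc k" "k-1"] by simp
    qed
    thus "vec (k-1) = vec k" using unit_par[OF u1 nt] by simp
  qed
  have run: "\<And>m. a + m < b \<Longrightarrow> vec (a + m) = vec a"
  proof -
    fix m show "a + m < b \<Longrightarrow> vec (a + m) = vec a"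
    proof (induction m)
      case (Suc m)
      have "vec (a + Suc m - 1) = vec (a + Suc m)" using same[of "a + Suc m"] Suc.prems by simp
      thus ?case using Suc by simp
    qed simp
  qed
  define w where "w = vec a"
  define pre where "pre = take a ps"
  define seg where "seg = take (Suc b - a) (drop a ps)"
  have ps_eq: "pre @ seg = take (Suc b) ps" unfolding pre_def seg_def using take_add[of a "Suc b - a" ps] ab by simp
  have lseg: "length seg = Suc b - a" using bn ab n_def seg_def by simp
  have segnth: "\<And>m. m < length seg \<Longrightarrow> seg ! m = ps ! (a + m)" using lseg seg_def ab bn n_def by simp
  have path: "pathat tf (pre @ seg)"
  proof -
    have "ps = take (Suc b) ps @ drop (Suc b) ps" by simp
    hence "chain E (take (Suc b) ps)" using psP(4) consec_append[of _ "take (Suc b) ps" "drop (Suc b) ps"] by simp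
    moreover have "take (Suc b) ps \<noteq> []" using psP(1) by simp
    moreover have "hd (take (Suc b) ps) = u0" using psP(1) pth(2) by (cases ps) auto
    moreover have "set (take (Suc b) ps) \<subseteq> V" using psP(3) set_take_subset by fastforce
    ultimately show ?thesis unfolding ps_eq pathat_def using VE psP(2) by auto
  qed
  have l2: "2 \<le> length seg" using lseg ab by simp
  have wr: "wrun (PP tf) w seg" unfolding consec_iff
  proof (intro allI impI)
    fix m assume m: "Suc m < length seg"
    have "PP tf (seg ! Suc m) - PP tf (seg ! m) = vec (a + m)"
      using segnth m PPd[of "a+m" "Suc (a+m)"] lseg bn n_def vec_def by simp
    thus "PP tf (seg ! Suc m) - PP tf (seg ! m) = w" using run[of m] m lseg w_def by simp
  qed
  have segne: "seg \<noteq> []" using l2 by auto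
  have hs: "hd seg = ps ! a" using segnth[of 0] segne hd_conv_nth[OF segne] by simp
  have ls: "last seg = ps ! b" using segnth[of "length seg - 1"] segne l2 lseg ab last_conv_nth[OF segne] by simp
  have turn: "pre \<noteq> [] \<Longrightarrow> perp (PP tf (hd seg) - PP tf (last pre)) w"
  proof -
    assume "pre \<noteq> []"
    hence a0: "a \<noteq> 0" using pre_def by simp
    have tne: "take a ps \<noteq> []" using a0 psP(1) by simp
    have lp: "last pre = ps ! (a - 1)" using a0 bn ab n_def pre_def last_conv_nth[OF tne] by simp
    have "a \<noteq> length ps - 1" using ab bn n_def by simp
    hence "perp (pos (ps ! a) - pos (ps ! (a - 1))) (pos (ps ! (a + 1)) - pos (ps ! a))"
      using ta a0 by (simp add: is_turning_def)
    moreover have "PP tf (ps!a) - PP tf (ps!(a-1)) = pos (ps ! a) - pos (ps ! (a - 1))"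
      using PPd ab bn by simp
    ultimately show ?thesis using hs lp w_def vec_def by simp
  qed
  have wu: "w \<noteq> 0 \<and> (fst w = 0 \<or> snd w = 0)" using unit_nz unit[of a] ab bn w_def by simp
  obtain s g where sg: "1 \<le> s" "gen_at \<sigma> s g (ps!b)" "g = ps!a \<or> gen_chain \<sigma> (ps!a) g"
    "on_common_segment (VV s) (EE s) (PP s) {ps!a, g, ps!b}"
  proof -
    have "\<exists>s g. 1 \<le> s \<and> s \<le> tf \<and> gen_at \<sigma> s g (last seg) \<and> (g = hd seg \<or> gen_chain \<sigma> (hd seg) g) \<and>
       on_common_segment (VV s) (EE s) (PP s) {hd seg, g, last seg}"
      using core[OF le_refl path l2 wr] turn wu by blast
    thus ?thesis using that hs ls by auto
  qed
  have "maps_to \<sigma> (ps!a) (ps!b)" unfolding maps_to_def maps_at_def using sg by blast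
  thus "maps_to \<sigma> (turning_points pos ps ! i) (turning_points pos ps ! Suc i)"
    using tp li a_def b_def by simp
qed

end
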